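(* For all $n$, there is a bijection between $\mathbf{I}_n(120)$ and $S_n(\underline{143}2)$; in particular $|\mathbf{I}_n(120)|=|S_n(\underline{143}2)|$.
   Context: $S_n$ is the set of permutations of $[n]$, and $\mathbf{I}_n$ the set of integer sequences $e_1\dots e_n$ with $0\le e_i<i$. $\mathbf{I}_n(120)$ is the set of $e\in\mathbf{I}_n$ with no $i$ such that $e_{i+2}<e_i<e_{i+1}$. A permutation $\pi$ contains the vincular pattern $\underline{143}2$ if there exist $i$ and $j>i+2$ with $\pi_i<\pi_j<\pi_{i+2}<\pi_{i+1}$; $S_n(\underline{143}2)$ is the set of $\pi\in S_n$ that do not contain it. *)

theory Defs
  imports Main
begin

(* Sequences and permutations are represented as lists, read 1-indexed in the
   paper: the paper's e_i / pi_i is the list entry at position i-1. *)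

definition inv_seqs :: "nat \<Rightarrow> nat list set" where
  "inv_seqs n = {e. length e = n \<and> (\<forall>i<n. e ! i < i + 1)}"

definition inv_seqs_avoid_120 :: "nat \<Rightarrow> nat list set" where
  "inv_seqs_avoid_120 n = {e \<in> inv_seqs n.
     \<not> (\<exists>i. i + 2 < n \<and> e ! (i + 2) < e ! i \<and> e ! i < e ! (i + 1))}"

definition perms :: "nat \<Rightarrow> nat list set" where
  "perms n = {p. length p = n \<and> set p = {1..n}}"

(* containment of the vincular pattern 143-2 (first three entries adjacent) *)
definition contains_v1432 :: "nat list \<Rightarrow> bool" where
  "contains_v1432 p = (\<exists>i j. i + 2 < j \<and> j < length p \<and>
      p ! i < p ! j \<and> p ! j < p ! (i + 2) \<and> p ! (i + 2) < p ! (i + 1))"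

definition perms_avoid_v1432 :: "nat \<Rightarrow> nat list set" where
  "perms_avoid_v1432 n = {p \<in> perms n. \<not> contains_v1432 p}"

end

theory Submission
  imports Defs "HOL-Combinatorics.Multiset_Permutations"
begin

fun code :: "nat list \<Rightarrow> nat list" where
  "code [] = []"
| "code (x#xs) = code xs @ [length (filter (\<lambda>y. y < x) xs)]"

lemma length_code[simp]: "length (code p) = length p"
  by (induction p) auto

definition R :: "nat list \<Rightarrow> nat \<Rightarrow> nat" where
  "R p a = length (filter (\<lambda>y. y < p!a) (drop (Suc a) p))"

lemma code_nth: "i < length p \<Longrightarrow> code p ! i = R p (length p - 1 - i)"
proof (induction p arbitrary: i)
  case Nil then show ?case by simp
next
  case (Cons x xs)
  show ?case
  proof (cases "i < length xs")
    case True
    then have "code (x#xs) ! i = code xs ! i" by (simp add: nth_append)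
    also have "\<dots> = R xs (length xs - 1 - i)" using Cons.IH True by simp
    also have "\<dots> = R (x#xs) (length (x#xs) - 1 - i)"
      using True by (simp add: R_def Suc_diff_Suc)
    finally show ?thesis .
  next
    case False
    then have "i = length xs" using Cons.prems by simp
    then show ?thesis by (simp add: R_def nth_append)
  qed
qed

lemma code_inv: "code p \<in> inv_seqs (length p)"
proof -
  have "R p (length p - 1 - i) < i + 1" if "i < length p" for i
  proof -
    have "R p (length p - 1 - i) \<le> length (drop (Suc (length p - 1 - i)) p)"
      unfolding R_def by (rule length_filter_le)
    also have "\<dots> = i" using that by simp
    finally show ?thesis by simp
  qed
  then show ?thesis unfolding inv_seqs_def by (simp add: code_nth)
qed

lemma code_inj: "distinct p \<Longrightarrow> distinct q \<Longrightarrow> set p = set q \<Longrightarrow> code p = code q \<Longrightarrow> p = q"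
proof (induction p arbitrary: q)
  case Nil then show ?case by simp
next
  case (Cons x xs)
  obtain y ys where q: "q = y # ys" using Cons.prems(3) by (cases q) auto
  have len: "length xs = length ys"
    using Cons.prems(4) q by (metis length_code length_Cons nat.inject)
  from Cons.prems(4) q len have c: "code xs = code ys"
    and r: "length (filter (\<lambda>z. z < x) xs) = length (filter (\<lambda>z. z < y) ys)"
    by auto
  have rx: "length (filter (\<lambda>z. z < x) xs) = card {z \<in> set (x#xs). z < x}"
    using Cons.prems(1) by (auto simp: distinct_length_filter intro: arg_cong[where f=card])
  have ry: "length (filter (\<lambda>z. z < y) ys) = card {z \<in> set (y#ys). z < y}"
    using Cons.prems(2) q by (auto simp: distinct_length_filter intro: arg_cong[where f=card])
  let ?S = "set (x#xs)"
  have ry': "length (filter (\<lambda>z. z < y) ys) = card {z \<in> ?S. z < y}"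
    using ry Cons.prems(3) q by simp
  have yS: "y \<in> ?S" using Cons.prems(3) q by auto
  have xy: "x = y"
  proof (rule ccontr)
    assume "x \<noteq> y"
    then consider "x < y" | "y < x" by linarith
    then show False
    proof cases
      case 1
      have "{z \<in> ?S. z < x} \<subset> {z \<in> ?S. z < y}" using 1 by auto
      then have "card {z \<in> ?S. z < x} < card {z \<in> ?S. z < y}"
        by (intro psubset_card_mono) auto
      then show False using r rx ry' by linarith
    next
      case 2
      have "{z \<in> ?S. z < y} \<subset> {z \<in> ?S. z < x}" using 2 yS by auto
      then have "card {z \<in> ?S. z < y} < card {z \<in> ?S. z < x}"
        by (intro psubset_card_mono) auto
      then show False using r rx ry' by linarith
    qed
  qed
  have "set xs = set ys" using Cons.prems q xy by auto
  then have "xs = ys" using Cons.IH[of ys] Cons.prems q c by auto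
  then show ?case using q xy by simp
qed

lemma inv_seqs_Suc:
  "inv_seqs (Suc n) = (\<lambda>(e,k). e @ [k]) ` (inv_seqs n \<times> {..n})"
proof
  show "inv_seqs (Suc n) \<subseteq> (\<lambda>(e,k). e @ [k]) ` (inv_seqs n \<times> {..n})"
  proof
    fix e assume e: "e \<in> inv_seqs (Suc n)"
    then have le: "length e = Suc n" and b: "\<forall>i<Suc n. e!i < i+1" by (auto simp: inv_seqs_def)
    have eq: "e = butlast e @ [last e]" using le
      by (metis append_butlast_last_id list.size(3) nat.distinct(1))
    have "butlast e \<in> inv_seqs n" using le b by (auto simp: inv_seqs_def nth_butlast)
    moreover have "last e \<le> n"
    proof -
      have "last e = e ! n" using le by (metis diff_Suc_1 last_conv_nth list.size(3) nat.distinct(1))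
      then show ?thesis using b by auto
    qed
    ultimately show "e \<in> (\<lambda>(e,k). e @ [k]) ` (inv_seqs n \<times> {..n})"
      using eq by (auto intro!: image_eqI[where x="(butlast e, last e)"])
  qed
next
  show "(\<lambda>(e,k). e @ [k]) ` (inv_seqs n \<times> {..n}) \<subseteq> inv_seqs (Suc n)"
    by (auto simp: inv_seqs_def nth_append less_Suc_eq)
qed

lemma card_inv_seqs: "card (inv_seqs n) = fact n"
proof (induction n)
  case 0
  have "inv_seqs 0 = {[]}" by (auto simp: inv_seqs_def)
  then show ?case by simp
next
  case (Suc n)
  have fin: "finite (inv_seqs n)" using Suc by (metis card.infinite fact_nonzero)
  have inj: "inj_on (\<lambda>(e,k). e @ [k]) (inv_seqs n \<times> {..n})"
    by (auto simp: inj_on_def)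
  have "card (inv_seqs (Suc n)) = card (inv_seqs n \<times> {..n})"
    unfolding inv_seqs_Suc by (rule card_image[OF inj])
  also have "\<dots> = fact n * Suc n" using Suc fin by (simp add: card_cartesian_product)
  finally show ?case by (simp add: algebra_simps)
qed

lemma perms_eq: "perms n = permutations_of_set {1..n}"
proof -
  have "distinct p" if "length p = n" "set p = {1..n}" for p
    using that by (simp add: card_distinct)
  moreover have "length p = n" if "distinct p" "set p = {1..n}" for p
    using that by (metis card_atLeastAtMost diff_Suc_1 distinct_card)
  ultimately show ?thesis unfolding perms_def permutations_of_set_def by auto
qed

lemma card_perms: "card (perms n) = fact n"
  by (simp add: perms_eq)

lemma local_sets:
  fixes D :: "nat set" and x y z :: nat
  assumes fin: "finite D" and nD: "x \<notin> D" "y \<notin> D" "z \<notin> D"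
    and dist: "x \<noteq> y" "y \<noteq> z" "x \<noteq> z"
  shows "(\<exists>d\<in>D. x < d \<and> d < z \<and> z < y) \<longleftrightarrow>
    (card {d\<in>D. d<x} + (if y<x then 1 else 0) + (if z<x then 1 else 0) < card {d\<in>D. d<z}
     \<and> card {d\<in>D. d<z} < (if z<y then 1 else 0) + card {d\<in>D. d<y})"
proof
  assume "\<exists>d\<in>D. x < d \<and> d < z \<and> z < y"
  then obtain d where d: "d \<in> D" "x < d" "d < z" "z < y" by blast
  have s1: "{d\<in>D. d<x} \<subseteq> {d\<in>D. d<z}" using d by auto
  have s2: "d \<in> {d\<in>D. d<z}" "d \<notin> {d\<in>D. d<x}" using d by auto
  have "{d\<in>D. d<x} \<subset> {d\<in>D. d<z}" using s1 s2 by blast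
  then have 1: "card {d\<in>D. d<x} < card {d\<in>D. d<z}" using fin by (intro psubset_card_mono) auto
  have "{d\<in>D. d<z} \<subseteq> {d\<in>D. d<y}" using d by auto
  then have 2: "card {d\<in>D. d<z} \<le> card {d\<in>D. d<y}" using fin by (intro card_mono) auto
  show "card {d\<in>D. d<x} + (if y<x then 1 else 0) + (if z<x then 1 else 0) < card {d\<in>D. d<z}
     \<and> card {d\<in>D. d<z} < (if z<y then 1 else 0) + card {d\<in>D. d<y}"
    using 1 2 d by auto
next
  assume H: "card {d\<in>D. d<x} + (if y<x then 1 else 0) + (if z<x then 1 else 0) < card {d\<in>D. d<z}
     \<and> card {d\<in>D. d<z} < (if z<y then 1 else 0) + card {d\<in>D. d<y}"
  have zy: "z < y"
  proof (rule ccontr)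
    assume "\<not> z < y"
    then have "y < z" using dist by simp
    then have "{d\<in>D. d<y} \<subseteq> {d\<in>D. d<z}" by auto
    then have "card {d\<in>D. d<y} \<le> card {d\<in>D. d<z}" using fin by (intro card_mono) auto
    then show False using H \<open>\<not> z < y\<close> by simp
  qed
  have xz: "x < z"
  proof (rule ccontr)
    assume "\<not> x < z"
    then have "z < x" using dist by simp
    then have "{d\<in>D. d<z} \<subseteq> {d\<in>D. d<x}" by auto
    then have "card {d\<in>D. d<z} \<le> card {d\<in>D. d<x}" using fin by (intro card_mono) auto
    then show False using H \<open>z < x\<close> by simp
  qed
  have "card {d\<in>D. d<x} < card {d\<in>D. d<z}" using H by simp
  have "\<not> {d\<in>D. d<z} \<subseteq> {d\<in>D. d<x}"
  proof
    assume "{d\<in>D. d<z} \<subseteq> {d\<in>D. d<x}"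
    then have "card {d\<in>D. d<z} \<le> card {d\<in>D. d<x}" using fin by (intro card_mono) auto
    then show False using \<open>card {d\<in>D. d<x} < card {d\<in>D. d<z}\<close> by simp
  qed
  then obtain d where d: "d \<in> D" "d < z" "\<not> d < x" by blast
  have "d \<noteq> x" using d(1) nD(1) by auto
  then have "x < d" using d(3) by simp
  then show "\<exists>d\<in>D. x < d \<and> d < z \<and> z < y" using d zy by blast
qed

lemma local_list:
  assumes dp: "distinct p" and a: "a + 2 < length p"
  shows "(\<exists>j. a+2<j \<and> j<length p \<and> p!a<p!j \<and> p!j<p!(a+2) \<and> p!(a+2)<p!(a+1)) \<longleftrightarrow>
         (R p a < R p (a+2) \<and> R p (a+2) < R p (a+1))"
proof -
  define x where "x = p!a"
  define y where "y = p!(a+1)"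
  define z where "z = p!(a+2)"
  define Dl where "Dl = drop (a+3) p"
  define D where "D = set Dl"
  have memD: "d \<in> D \<longleftrightarrow> (\<exists>j. a+2 < j \<and> j < length p \<and> d = p!j)" for d
  proof
    assume "d \<in> D"
    then obtain k where "k < length Dl" "d = Dl!k" unfolding D_def by (auto simp: in_set_conv_nth)
    then show "\<exists>j. a+2 < j \<and> j < length p \<and> d = p!j" unfolding Dl_def
      by (intro exI[where x="a+3+k"]) auto
  next
    assume "\<exists>j. a+2 < j \<and> j < length p \<and> d = p!j"
    then obtain j where j: "a+2 < j" "j < length p" "d = p!j" by blast
    then have "Dl ! (j - (a+3)) = d" "j - (a+3) < length Dl" unfolding Dl_def by auto
    then show "d \<in> D" unfolding D_def by (metis nth_mem)
  qed
  have nD: "x \<notin> D" "y \<notin> D" "z \<notin> D"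
    using dp a unfolding memD x_def y_def z_def by (auto simp: nth_eq_iff_index_eq)
  have dist: "x \<noteq> y" "y \<noteq> z" "x \<noteq> z"
    using dp a unfolding x_def y_def z_def by (auto simp: nth_eq_iff_index_eq)
  have dDl: "distinct Dl" unfolding Dl_def using dp by simp
  have cnt: "length (filter (\<lambda>d. d < v) Dl) = card {d\<in>D. d<v}" for v
    using dDl unfolding D_def by (simp add: distinct_length_filter Collect_conj_eq Int_commute)
  have e3: "Suc (a+2) = a+3" and e2: "Suc (a+1) = a+2" by simp_all
  have d2: "drop (a+2) p = z # Dl" unfolding z_def Dl_def
    using Cons_nth_drop_Suc[of "a+2" p] a unfolding e3 by simp
  have d1: "drop (a+1) p = y # z # Dl" unfolding y_def
    using Cons_nth_drop_Suc[of "a+1" p] a d2 unfolding e2 by simp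
  have Ra: "R p a = card {d\<in>D. d<x} + (if y<x then 1 else 0) + (if z<x then 1 else 0)"
    unfolding R_def using d1 cnt[of x] by (simp add: x_def[symmetric])
  have Ra1: "R p (a+1) = (if z<y then 1 else 0) + card {d\<in>D. d<y}"
  proof -
    have "R p (a+1) = length (filter (\<lambda>d. d<y) (drop (a+2) p))" unfolding R_def y_def
      by (simp add: e2)
    then show ?thesis using d2 cnt[of y] by simp
  qed
  have Ra2: "R p (a+2) = card {d\<in>D. d<z}"
  proof -
    have "R p (a+2) = length (filter (\<lambda>d. d<z) Dl)" unfolding R_def z_def Dl_def
      by (simp add: numeral_3_eq_3)
    then show ?thesis using cnt[of z] by simp
  qed
  have "(\<exists>j. a+2<j \<and> j<length p \<and> p!a<p!j \<and> p!j<p!(a+2) \<and> p!(a+2)<p!(a+1))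
        \<longleftrightarrow> (\<exists>d\<in>D. x < d \<and> d < z \<and> z < y)"
  proof
    assume "\<exists>j. a+2<j \<and> j<length p \<and> p!a<p!j \<and> p!j<p!(a+2) \<and> p!(a+2)<p!(a+1)"
    then obtain j where j: "a+2<j" "j<length p" "p!a<p!j" "p!j<p!(a+2)" "p!(a+2)<p!(a+1)" by blast
    have "p!j \<in> D" using memD j(1,2) by blast
    then show "\<exists>d\<in>D. x < d \<and> d < z \<and> z < y" using j(3-5) unfolding x_def y_def z_def by blast
  next
    assume "\<exists>d\<in>D. x < d \<and> d < z \<and> z < y"
    then obtain d where d: "d \<in> D" "x < d" "d < z" "z < y" by blast
    obtain j where j: "a+2 < j" "j < length p" "d = p!j" using memD d(1) by blast
    show "\<exists>j. a+2<j \<and> j<length p \<and> p!a<p!j \<and> p!j<p!(a+2) \<and> p!(a+2)<p!(a+1)"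
      using j d unfolding x_def y_def z_def by blast
  qed
  also have "\<dots> \<longleftrightarrow> (R p a < R p (a+2) \<and> R p (a+2) < R p (a+1))"
    unfolding Ra Ra1 Ra2 by (rule local_sets[OF _ nD dist]) (simp add: D_def)
  finally show ?thesis .
qed

lemma perms_distinct: "p \<in> perms n \<Longrightarrow> distinct p \<and> length p = n"
proof -
  assume "p \<in> perms n"
  then have "length p = n" "set p = {1..n}" by (auto simp: perms_def)
  then show ?thesis by (simp add: card_distinct)
qed

lemma contains_iff:
  assumes "p \<in> perms n"
  shows "contains_v1432 p \<longleftrightarrow> (\<exists>a. a+2<n \<and> R p a < R p (a+2) \<and> R p (a+2) < R p (a+1))"
proof -
  have dp: "distinct p" and lp: "length p = n" using perms_distinct[OF assms] by auto
  show ?thesis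
  proof
    assume "contains_v1432 p"
    then obtain i j where ij: "i + 2 < j" "j < length p" "p ! i < p ! j" "p ! j < p ! (i + 2)"
      "p ! (i + 2) < p ! (i + 1)" unfolding contains_v1432_def by blast
    have "i + 2 < length p" using ij by simp
    then have "R p i < R p (i+2) \<and> R p (i+2) < R p (i+1)"
      using local_list[OF dp] ij by blast
    then show "\<exists>a. a+2<n \<and> R p a < R p (a+2) \<and> R p (a+2) < R p (a+1)"
      using ij lp by (intro exI[where x=i]) auto
  next
    assume "\<exists>a. a+2<n \<and> R p a < R p (a+2) \<and> R p (a+2) < R p (a+1)"
    then obtain a where a: "a+2<n" "R p a < R p (a+2)" "R p (a+2) < R p (a+1)" by blast
    then obtain j where "a+2<j \<and> j<length p \<and> p!a<p!j \<and> p!j<p!(a+2) \<and> p!(a+2)<p!(a+1)"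
      using local_list[OF dp, of a] lp by auto
    then show "contains_v1432 p" unfolding contains_v1432_def by blast
  qed
qed

lemma avoid_iff:
  assumes P: "p \<in> perms n"
  shows "code p \<in> inv_seqs_avoid_120 n \<longleftrightarrow> \<not> contains_v1432 p"
proof -
  have lp: "length p = n" using perms_distinct[OF P] by auto
  have inv: "code p \<in> inv_seqs n" using code_inv[of p] lp by simp
  let ?e = "code p"
  have "(\<exists>i. i + 2 < n \<and> ?e ! (i + 2) < ?e ! i \<and> ?e ! i < ?e ! (i + 1)) \<longleftrightarrow>
        (\<exists>a. a+2<n \<and> R p a < R p (a+2) \<and> R p (a+2) < R p (a+1))"
  proof
    assume "\<exists>i. i + 2 < n \<and> ?e ! (i + 2) < ?e ! i \<and> ?e ! i < ?e ! (i + 1)"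
    then obtain i where i: "i + 2 < n" "?e ! (i + 2) < ?e ! i" "?e ! i < ?e ! (i + 1)" by blast
    have ar: "n - 1 - i = (n-3-i)+2" "n - 1 - (i+1) = (n-3-i)+1" "n - 1 - (i+2) = n-3-i"
      using i(1) by auto
    have "?e ! (i) = R p (length p - 1 - (i))" by (rule code_nth) (use i(1) lp in simp)
    then have e0: "?e ! (i) = R p ((n-3-i)+2)" unfolding lp ar .
    have "?e ! (i+1) = R p (length p - 1 - (i+1))" by (rule code_nth) (use i(1) lp in simp)
    then have e1: "?e ! (i+1) = R p ((n-3-i)+1)" unfolding lp ar .
    have "?e ! (i+2) = R p (length p - 1 - (i+2))" by (rule code_nth) (use i(1) lp in simp)
    then have e2: "?e ! (i+2) = R p (n-3-i)" unfolding lp ar .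
    show "\<exists>a. a+2<n \<and> R p a < R p (a+2) \<and> R p (a+2) < R p (a+1)"
    proof -
      have "n-3-i+2 < n" using i(1) by linarith
      then show ?thesis using i(2,3) unfolding e0 e1 e2 by blast
    qed
  next
    assume "\<exists>a. a+2<n \<and> R p a < R p (a+2) \<and> R p (a+2) < R p (a+1)"
    then obtain a where a: "a+2<n" "R p a < R p (a+2)" "R p (a+2) < R p (a+1)" by blast
    define i where "i = n - 3 - a"
    have i2: "i + 2 < n" using a(1) unfolding i_def by simp
    have ar: "n - 1 - i = a+2" "n - 1 - (i+1) = a+1" "n - 1 - (i+2) = a"
      using a(1) unfolding i_def by auto
    have "?e ! (i) = R p (length p - 1 - (i))" by (rule code_nth) (use i2 lp in simp)
    then have e0: "?e ! (i) = R p (a+2)" unfolding lp ar .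
    have "?e ! (i+1) = R p (length p - 1 - (i+1))" by (rule code_nth) (use i2 lp in simp)
    then have e1: "?e ! (i+1) = R p (a+1)" unfolding lp ar .
    have "?e ! (i+2) = R p (length p - 1 - (i+2))" by (rule code_nth) (use i2 lp in simp)
    then have e2: "?e ! (i+2) = R p (a)" unfolding lp ar .
    show "\<exists>i. i + 2 < n \<and> ?e ! (i + 2) < ?e ! i \<and> ?e ! i < ?e ! (i + 1)"
    proof -
      have "i+2<n \<and> ?e!(i+2) < ?e!i \<and> ?e!i < ?e!(i+1)" unfolding e0 e1 e2 using i2 a(2,3) by blast
      then show ?thesis by blast
    qed
  qed
  note EQ = this
  have "code p \<in> inv_seqs_avoid_120 n \<longleftrightarrow>
     \<not> (\<exists>i. i + 2 < n \<and> ?e ! (i + 2) < ?e ! i \<and> ?e ! i < ?e ! (i + 1))"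
    unfolding inv_seqs_avoid_120_def using inv by (simp only: mem_Collect_eq simp_thms)
  then show ?thesis unfolding EQ contains_iff[OF P] .
qed

lemma code_bij: "bij_betw code (perms n) (inv_seqs n)"
proof -
  have inj: "inj_on code (perms n)"
  proof (rule inj_onI)
    fix p q assume p: "p \<in> perms n" and q: "q \<in> perms n" and c: "code p = code q"
    have "set p = set q" using p q by (simp add: perms_def)
    then show "p = q" using code_inj[OF _ _ _ c] perms_distinct[OF p] perms_distinct[OF q] by blast
  qed
  have sub: "code ` perms n \<subseteq> inv_seqs n"
  proof
    fix e assume "e \<in> code ` perms n"
    then obtain p where p: "p \<in> perms n" "e = code p" by blast
    then show "e \<in> inv_seqs n" using code_inv[of p] perms_distinct[OF p(1)] by simp
  qed
  have fin: "finite (inv_seqs n)" using card_inv_seqs[of n] by (metis card.infinite fact_nonzero)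
  have "card (code ` perms n) = card (inv_seqs n)"
    using card_image[OF inj] card_perms card_inv_seqs by simp
  then have "code ` perms n = inv_seqs n" using card_subset_eq[OF fin sub] by simp
  then show ?thesis using inj by (simp add: bij_betw_def)
qed

lemma code_bij_avoid: "bij_betw code (perms_avoid_v1432 n) (inv_seqs_avoid_120 n)"
proof -
  have inj: "inj_on code (perms_avoid_v1432 n)"
    using code_bij unfolding bij_betw_def perms_avoid_v1432_def by (auto intro: inj_on_subset)
  have "code ` perms_avoid_v1432 n = inv_seqs_avoid_120 n"
  proof
    show "code ` perms_avoid_v1432 n \<subseteq> inv_seqs_avoid_120 n"
      using avoid_iff unfolding perms_avoid_v1432_def by auto
  next
    show "inv_seqs_avoid_120 n \<subseteq> code ` perms_avoid_v1432 n"
    proof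
      fix e assume e: "e \<in> inv_seqs_avoid_120 n"
      then have "e \<in> inv_seqs n" unfolding inv_seqs_avoid_120_def by simp
      then obtain p where p: "p \<in> perms n" "e = code p"
        using code_bij unfolding bij_betw_def by auto
      then have "\<not> contains_v1432 p" using avoid_iff e by blast
      then show "e \<in> code ` perms_avoid_v1432 n" using p unfolding perms_avoid_v1432_def by auto
    qed
  qed
  then show ?thesis using inj by (simp add: bij_betw_def)
qed

theorem mainTheorem20:
  fixes n :: nat
  shows "(\<exists>f. bij_betw f (inv_seqs_avoid_120 n) (perms_avoid_v1432 n))
         \<and> card (inv_seqs_avoid_120 n) = card (perms_avoid_v1432 n)"
proof -
  have b: "bij_betw code (perms_avoid_v1432 n) (inv_seqs_avoid_120 n)" by (rule code_bij_avoid)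
  then have "bij_betw (the_inv_into (perms_avoid_v1432 n) code) (inv_seqs_avoid_120 n) (perms_avoid_v1432 n)"
    by (rule bij_betw_the_inv_into)
  moreover have "card (inv_seqs_avoid_120 n) = card (perms_avoid_v1432 n)"
    using bij_betw_same_card[OF b] by simp
  ultimately show ?thesis by blast
qed

end
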